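(* Let $1<a<b$ be coprime integers and $D,E\subseteq G$ subdiagrams. Let $N(D,U_E)=\{(i,j)\in D\times U_E: i\to j\}$, let $N_b(D,U_E)$ be the set of $(i,j)\in N(D,U_E)$ with $j$ strictly north of $i$, and $N_r(D,U_E)=N(D,U_E)\setminus N_b(D,U_E)$ (pairs with $j$ strictly south of $i$ or $j=i$). Then \[ |N_b(D,U_E)|=\#\{c\in D\cap E:\ M_D^E(c)\le a/b\},\qquad |N_r(D,U_E)|=|D\setminus E|+\#\{c\in D\cap E:\ m_E^D(c)\ge a/b\}. \]
   Context: Fix coprime integers $1<a<b$. Work in the grid $\mathbb{Z}^2$ ($+x$ east, $+y$ north). Let $g:\mathbb{Z}^2\to\mathbb{Z}$, $g(x,y)=ab-ax-by$; for a cell $c=(x,y)$ and integer $k$, $c-ka:=(x+k,y)$ and $c-kb:=(x,y+k)$. Let $G=\{(x,y)\in\mathbb{Z}_{\ge1}^2: g(x,y)>0\}$. A subdiagram is a subset $D\subseteq G$ such that whenever $(x,y)\in D$, $(x',y')\in G$, $x'\le x$, $y'\le y$, we have $(x',y')\in D$. For cells $i,j$, write $i\to j$ iff $0\le g(j)-g(i)<a$. For a subdiagram $E$, $U_E=\{(x,y)\in\mathbb{Z}^2: (x,y)\notin E,\ (x,y-1)\in E\cup(\mathbb{Z}_{\ge1}\times\mathbb{Z}_{\le0})\}$. For a subdiagram $D$ and $c\in D$, $\mathrm{arm}_D(c)=\max\{k\ge0: c-ka\in D\}$, $\mathrm{leg}_D(c)=\max\{k\ge0: c-kb\in D\}$.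 For subdiagrams $D,E$ and $c\in D\cap E$, $m_D^E(c)=\frac{\mathrm{leg}_E(c)}{\mathrm{arm}_D(c)+1}$ and $M_D^E(c)=\frac{\mathrm{leg}_E(c)+1}{\mathrm{arm}_D(c)}$ (with $M_D^E(c)=+\infty$ if $\mathrm{arm}_D(c)=0$). *)

theory Defs
  imports Complex_Main "HOL-Library.Extended_Real"
begin

type_synonym cell = "int \<times> int"

definition gfun :: "int \<Rightarrow> int \<Rightarrow> cell \<Rightarrow> int" where
  "gfun a b c = a * b - a * fst c - b * snd c"

definition Gset :: "int \<Rightarrow> int \<Rightarrow> cell set" where
  "Gset a b = {(x, y). x \<ge> 1 \<and> y \<ge> 1 \<and> gfun a b (x, y) > 0}"

definition subdiagram :: "int \<Rightarrow> int \<Rightarrow> cell set \<Rightarrow> bool" where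
  "subdiagram a b D \<longleftrightarrow> D \<subseteq> Gset a b \<and>
     (\<forall>x y x' y'. (x, y) \<in> D \<longrightarrow> (x', y') \<in> Gset a b \<longrightarrow> x' \<le> x \<longrightarrow> y' \<le> y
        \<longrightarrow> (x', y') \<in> D)"

definition arrow :: "int \<Rightarrow> int \<Rightarrow> cell \<Rightarrow> cell \<Rightarrow> bool" where
  "arrow a b i j \<longleftrightarrow> 0 \<le> gfun a b j - gfun a b i \<and> gfun a b j - gfun a b i < a"

definition Uset :: "cell set \<Rightarrow> cell set" where
  "Uset E = {(x, y). (x, y) \<notin> E \<and> y \<ge> 1 \<and>
              ((x, y - 1) \<in> E \<or> (x \<ge> 1 \<and> y - 1 \<le> 0))}"

definition arm :: "cell set \<Rightarrow> cell \<Rightarrow> nat" where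
  "arm D c = Max {k. (fst c + int k, snd c) \<in> D}"

definition leg :: "cell set \<Rightarrow> cell \<Rightarrow> nat" where
  "leg D c = Max {k. (fst c, snd c + int k) \<in> D}"

definition small_m :: "cell set \<Rightarrow> cell set \<Rightarrow> cell \<Rightarrow> real" where
  "small_m D E c = real (leg E c) / (real (arm D c) + 1)"

definition big_M :: "cell set \<Rightarrow> cell set \<Rightarrow> cell \<Rightarrow> ereal" where
  "big_M D E c = (if arm D c = 0 then PInfty
                  else ereal ((real (leg E c) + 1) / real (arm D c)))"

definition Nset :: "int \<Rightarrow> int \<Rightarrow> cell set \<Rightarrow> cell set \<Rightarrow> (cell \<times> cell) set" where
  "Nset a b D E = {(i, j). i \<in> D \<and> j \<in> Uset E \<and> arrow a b i j}"

definition Nb :: "int \<Rightarrow> int \<Rightarrow> cell set \<Rightarrow> cell set \<Rightarrow> (cell \<times> cell) set" where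
  "Nb a b D E = {(i, j) \<in> Nset a b D E. snd j > snd i}"

definition Nr :: "int \<Rightarrow> int \<Rightarrow> cell set \<Rightarrow> cell set \<Rightarrow> (cell \<times> cell) set" where
  "Nr a b D E = Nset a b D E - Nb a b D E"

end

theory Submission
  imports Defs
begin


definition colh :: "cell set \<Rightarrow> int \<Rightarrow> int" where
  "colh S x = int (card {y. (x, y) \<in> S})"
definition rowl :: "cell set \<Rightarrow> int \<Rightarrow> int" where
  "rowl S y = int (card {x. (x, y) \<in> S})"

lemma G_bound:
  assumes "(x, y) \<in> Gset a b" "0 < a" "0 < b"
  shows "1 \<le> x \<and> x \<le> b \<and> 1 \<le> y \<and> y \<le> a"
proof -
  have h: "1 \<le> x" "1 \<le> y" "a*b - a*x - b*y > 0" using assms(1) by (auto simp: Gset_def gfun_def)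
  have "b*y \<ge> b" using h(2) assms(3) by simp
  hence "a*b - a*x > 0" using h(3) assms(3) by linarith
  hence "a*(b-x) > 0" by (simp add: right_diff_distrib)
  hence "b - x > 0" using assms(2) by (simp add: zero_less_mult_iff)
  moreover have "a*x \<ge> a" using h(1) assms(2) by simp
  hence "a*b - b*y > 0" using h(3) assms(2) by linarith
  hence "b*(a-y) > 0" by (simp add: right_diff_distrib mult.commute)
  hence "a - y > 0" using assms(3) by (simp add: zero_less_mult_iff)
  ultimately show ?thesis using h by simp
qed

lemma G_down:
  assumes "(x, y) \<in> Gset a b" "0 < a" "0 < b" "1 \<le> x'" "x' \<le> x" "1 \<le> y'" "y' \<le> y"
  shows "(x', y') \<in> Gset a b"
proof -
  have "a*x' \<le> a*x" "b*y' \<le> b*y" using assms by simp_all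
  thus ?thesis using assms(1,4,6) by (auto simp: Gset_def gfun_def)
qed

lemma sub_down:
  assumes "subdiagram a b S" "0 < a" "0 < b" "(x, y) \<in> S" "1 \<le> x'" "x' \<le> x" "1 \<le> y'" "y' \<le> y"
  shows "(x', y') \<in> S"
proof -
  have "(x,y) \<in> Gset a b" using assms(1,4) by (auto simp: subdiagram_def)
  hence "(x',y') \<in> Gset a b" using G_down assms by blast
  thus ?thesis using assms(1,4,6,8) unfolding subdiagram_def by blast
qed

lemma sub_G: "subdiagram a b S \<Longrightarrow> c \<in> S \<Longrightarrow> c \<in> Gset a b"
  by (auto simp: subdiagram_def)

lemma sub_bound:
  assumes "subdiagram a b S" "0 < a" "0 < b" "(x, y) \<in> S"
  shows "1 \<le> x \<and> x \<le> b \<and> 1 \<le> y \<and> y \<le> a"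
  using G_bound[OF sub_G[OF assms(1,4)] assms(2,3)] by simp

lemma sub_finite:
  assumes "subdiagram a b S" "0 < a" "0 < b"
  shows "finite S"
proof -
  have "S \<subseteq> {1..b} \<times> {1..a}" using sub_bound[OF assms] by auto
  thus ?thesis using finite_subset by blast
qed

lemma int_interval_set:
  fixes T :: "int set"
  assumes "finite T" "\<forall>y\<in>T. 1 \<le> y" "\<forall>y\<in>T. \<forall>y'. 1 \<le> y' \<and> y' \<le> y \<longrightarrow> y' \<in> T"
  shows "T = {1..int (card T)}"
proof (cases "T = {}")
  case True thus ?thesis by simp
next
  case False
  define M where "M = Max T"
  have M: "M \<in> T" "\<forall>y\<in>T. y \<le> M" using False assms(1) by (auto simp: M_def)
  have "T \<subseteq> {1..M}" using M(2) assms(2) by auto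
  moreover have "{1..M} \<subseteq> T"
  proof
    fix y assume "y \<in> {1..M}"
    thus "y \<in> T" using assms(3) M(1) by auto
  qed
  ultimately have "T = {1..M}" by blast
  moreover have "M \<ge> 1" using M assms(2) by auto
  ultimately show ?thesis by simp
qed

lemma col_iff:
  assumes "subdiagram a b S" "0 < a" "0 < b"
  shows "(x, y) \<in> S \<longleftrightarrow> 1 \<le> y \<and> y \<le> colh S x"
proof -
  let ?T = "{y. (x, y) \<in> S}"
  have fin: "finite ?T"
  proof -
    have "?T \<subseteq> snd ` S" by force
    thus ?thesis using sub_finite[OF assms] finite_subset by blast
  qed
  have "?T = {1..int (card ?T)}"
  proof (rule int_interval_set[OF fin])
    show "\<forall>y\<in>?T. 1 \<le> y" using sub_bound[OF assms] by blast
    show "\<forall>y\<in>?T. \<forall>y'. 1 \<le> y' \<and> y' \<le> y \<longrightarrow> y' \<in> ?T"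
    proof (intro ballI allI impI)
      fix y y' assume yy: "y \<in> ?T" "1 \<le> y' \<and> y' \<le> y"
      have "1 \<le> x" using sub_bound[OF assms, of x y] yy by simp
      thus "y' \<in> ?T" using sub_down[OF assms, of x y x y'] yy by simp
    qed
  qed
  hence "y \<in> ?T \<longleftrightarrow> y \<in> {1..colh S x}" unfolding colh_def by simp
  thus ?thesis by simp
qed

lemma row_iff:
  assumes "subdiagram a b S" "0 < a" "0 < b"
  shows "(x, y) \<in> S \<longleftrightarrow> 1 \<le> x \<and> x \<le> rowl S y"
proof -
  let ?T = "{x. (x, y) \<in> S}"
  have fin: "finite ?T"
  proof -
    have "?T \<subseteq> fst ` S" by force
    thus ?thesis using sub_finite[OF assms] finite_subset by blast
  qed
  have "?T = {1..int (card ?T)}"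
  proof (rule int_interval_set[OF fin])
    show "\<forall>y\<in>?T. 1 \<le> y" using sub_bound[OF assms] by blast
    show "\<forall>y\<in>?T. \<forall>y'. 1 \<le> y' \<and> y' \<le> y \<longrightarrow> y' \<in> ?T"
    proof (intro ballI allI impI)
      fix x x' assume xx: "x \<in> ?T" "1 \<le> x' \<and> x' \<le> x"
      have "1 \<le> y" using sub_bound[OF assms, of x y] xx by simp
      thus "x' \<in> ?T" using sub_down[OF assms, of x y x' y] xx by simp
    qed
  qed
  hence "x \<in> ?T \<longleftrightarrow> x \<in> {1..rowl S y}" unfolding rowl_def by simp
  thus ?thesis by simp
qed

lemma colh_nonneg: "0 \<le> colh S x" by (simp add: colh_def)

lemma colh_mono:
  assumes "subdiagram a b S" "0 < a" "0 < b" "1 \<le> x" "x \<le> x'"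
  shows "colh S x' \<le> colh S x"
proof (cases "colh S x' \<ge> 1")
  case True
  hence "(x', colh S x') \<in> S" using col_iff[OF assms(1-3)] by simp
  hence "(x, colh S x') \<in> S" using sub_down[OF assms(1-3)] assms(4,5) True by blast
  thus ?thesis using col_iff[OF assms(1-3)] by simp
next
  case False thus ?thesis using colh_nonneg[of S x] by simp
qed

lemma arm_eq:
  assumes "subdiagram a b S" "0 < a" "0 < b" "c \<in> S"
  shows "int (arm S c) = rowl S (snd c) - fst c"
proof -
  obtain x y where c: "c = (x, y)" by force
  have x1: "1 \<le> x" and r: "x \<le> rowl S y" using assms(4) c row_iff[OF assms(1-3)] by auto
  have set: "{k. (fst c + int k, snd c) \<in> S} = {k. int k \<le> rowl S y - x}"
  proof (intro Collect_cong)
    fix k show "(fst c + int k, snd c) \<in> S \<longleftrightarrow> int k \<le> rowl S y - x"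
      using row_iff[OF assms(1-3), of "x + int k" y] x1 c by auto
  qed
  have "Max {k. int k \<le> rowl S y - x} = nat (rowl S y - x)"
  proof (rule Max_eqI)
    show "finite {k. int k \<le> rowl S y - x}"
      by (rule finite_subset[of _ "{..nat (rowl S y - x)}"]) auto
  qed (use r in auto)
  thus ?thesis unfolding arm_def set using r c by simp
qed

lemma leg_eq:
  assumes "subdiagram a b S" "0 < a" "0 < b" "c \<in> S"
  shows "int (leg S c) = colh S (fst c) - snd c"
proof -
  obtain x y where c: "c = (x, y)" by force
  have y1: "1 \<le> y" and r: "y \<le> colh S x" using assms(4) c col_iff[OF assms(1-3)] by auto
  have set: "{k. (fst c, snd c + int k) \<in> S} = {k. int k \<le> colh S x - y}"
  proof (intro Collect_cong)
    fix k show "(fst c, snd c + int k) \<in> S \<longleftrightarrow> int k \<le> colh S x - y"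
      using col_iff[OF assms(1-3), of x "y + int k"] y1 c by auto
  qed
  have "Max {k. int k \<le> colh S x - y} = nat (colh S x - y)"
  proof (rule Max_eqI)
    show "finite {k. int k \<le> colh S x - y}"
      by (rule finite_subset[of _ "{..nat (colh S x - y)}"]) auto
  qed (use r in auto)
  thus ?thesis unfolding leg_def set using r c by simp
qed

lemma Uset_iff:
  assumes "subdiagram a b S" "0 < a" "0 < b"
  shows "(x, y) \<in> Uset S \<longleftrightarrow> 1 \<le> x \<and> y = colh S x + 1"
proof
  assume "(x, y) \<in> Uset S"
  hence h: "(x,y) \<notin> S" "y \<ge> 1" "(x, y-1) \<in> S \<or> (x \<ge> 1 \<and> y - 1 \<le> 0)" unfolding Uset_def by auto
  have c1: "\<not> (y \<le> colh S x)" using h(1,2) col_iff[OF assms, of x y] by simp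
  show "1 \<le> x \<and> y = colh S x + 1"
  proof (cases "(x, y-1) \<in> S")
    case True
    have "y - 1 \<le> colh S x" using True col_iff[OF assms, of x "y-1"] by simp
    moreover have "1 \<le> x" using True sub_bound[OF assms, of x "y-1"] by simp
    ultimately show ?thesis using c1 by simp
  next
    case False
    hence "x \<ge> 1" "y = 1" using h by auto
    thus ?thesis using c1 colh_nonneg[of S x] by simp
  qed
next
  assume h: "1 \<le> x \<and> y = colh S x + 1"
  have n: "(x,y) \<notin> S" using h col_iff[OF assms, of x y] by simp
  show "(x, y) \<in> Uset S"
  proof (cases "colh S x \<ge> 1")
    case True
    hence "(x, y-1) \<in> S" using h col_iff[OF assms, of x "y-1"] by simp
    thus ?thesis using n h colh_nonneg[of S x] unfolding Uset_def by simp
  next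
    case False
    hence "y = 1" using h colh_nonneg[of S x] by simp
    thus ?thesis using n h unfolding Uset_def by simp
  qed
qed

lemma ceil_lemma:
  fixes K c :: int assumes "0 < c"
  shows "K \<le> c * ((K + c - 1) div c) \<and> c * ((K + c - 1) div c) < K + c"
proof -
  have "K + c - 1 = c * ((K + c - 1) div c) + (K + c - 1) mod c" by simp
  moreover have "0 \<le> (K + c - 1) mod c" "(K + c - 1) mod c < c" using assms by simp_all
  ultimately show ?thesis by linarith
qed

lemma mcancel_lt: "0 < (c::int) \<Longrightarrow> c * x < c * y \<Longrightarrow> x < y"
  by (simp add: mult_less_cancel_left)
lemma mcancel_lt1: "0 < (c::int) \<Longrightarrow> c * x < c * y + c \<Longrightarrow> x \<le> y"
proof -
  assume "0 < c" "c * x < c * y + c"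
  hence "c * x < c * (y + 1)" by (simp add: algebra_simps)
  hence "x < y + 1" using \<open>0 < c\<close> by (simp add: mult_less_cancel_left)
  thus "x \<le> y" by simp
qed
lemma mmono: "0 < (c::int) \<Longrightarrow> x \<le> y \<Longrightarrow> c * x \<le> c * y"
  by simp
lemma uniq_a:
  fixes a t t' K :: int
  assumes "0 < a" "0 \<le> a*t + K" "a*t + K < a" "0 \<le> a*t' + K" "a*t' + K < a"
  shows "t = t'"
proof -
  have "a*t < a*t' + a" "a*t' < a*t + a" using assms by linarith+
  hence "t \<le> t'" "t' \<le> t" using mcancel_lt1[OF assms(1)] by blast+
  thus ?thesis by simp
qed
lemma telescope:
  fixes f :: "int \<Rightarrow> int"
  shows "(\<Sum>x\<in>{u..<u + int n}. f x - f (x+1)) = f u - f (u + int n)"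
proof (induction n)
  case 0 thus ?case by simp
next
  case (Suc n)
  have e: "u + int (Suc n) = u + int n + 1" by simp
  have I: "{u..<u+int n+1} = insert (u+int n) {u..<u+int n}" by auto
  have "(\<Sum>x\<in>{u..<u+int n+1}. f x - f(x+1)) = (f (u+int n) - f(u+int n+1)) + (\<Sum>x\<in>{u..<u+int n}. f x - f(x+1))"
    unfolding I by (subst sum.insert) auto
  thus ?case unfolding e using Suc.IH by simp
qed
lemma mcancel_le: "0 < (c::int) \<Longrightarrow> c * x \<le> c * y \<Longrightarrow> x \<le> y"
  by (simp add: mult_le_cancel_left)



locale twoD =
  fixes a b :: int and D E :: "cell set"
  assumes a1: "1 < a" and ab: "a < b" and sD: "subdiagram a b D" and sE: "subdiagram a b E"
begin

lemma apos: "0 < a" using a1 by simp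
lemma bpos: "0 < b" using a1 ab by simp

lemmas colD = col_iff[OF sD apos bpos]
lemmas colE = col_iff[OF sE apos bpos]
lemmas rowD = row_iff[OF sD apos bpos]
lemmas rowE = row_iff[OF sE apos bpos]
lemmas bdD = sub_bound[OF sD apos bpos]
lemmas bdE = sub_bound[OF sE apos bpos]
lemmas finD = sub_finite[OF sD apos bpos]
lemmas finE = sub_finite[OF sE apos bpos]

lemma gdiff: "gfun a b (x, y) - gfun a b (p, q) = a*(p-x) + b*(q-y)"
  by (simp add: gfun_def algebra_simps)

lemma Nset_iff: "((p,q),(x,y)) \<in> Nset a b D E \<longleftrightarrow>
   (p,q) \<in> D \<and> 1 \<le> x \<and> y = colh E x + 1 \<and> 0 \<le> a*(p-x) + b*(q-y) \<and> a*(p-x) + b*(q-y) < a"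
  unfolding Nset_def arrow_def using Uset_iff[OF sE apos bpos, of x y] gdiff[of x y p q] by auto

definition C1 where "C1 = {(x,q). (x,q) \<in> D \<and> (x,q) \<in> E \<and> 0 < rowl D q - x \<and>
    b*(colh E x - q + 1) \<le> a*(rowl D q - x)}"

lemma frac1:
  fixes L A :: nat
  assumes "0 < A"
  shows "((real L + 1)/real A \<le> real_of_int a / real_of_int b) \<longleftrightarrow> b*(int L + 1) \<le> a * int A"
proof -
  have "((real L + 1)/real A \<le> real_of_int a / real_of_int b) \<longleftrightarrow> (real L + 1) * real_of_int b \<le> real_of_int a * real A"
    using assms bpos by (simp add: divide_le_eq le_divide_eq field_simps)
  also have "\<dots> \<longleftrightarrow> real_of_int (b*(int L + 1)) \<le> real_of_int (a * int A)"
    by (simp add: algebra_simps)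
  also have "\<dots> \<longleftrightarrow> b*(int L + 1) \<le> a * int A" by linarith
  finally show ?thesis .
qed

lemma frac2:
  fixes L A :: nat
  shows "(real_of_int a / real_of_int b \<le> real L / (real A + 1)) \<longleftrightarrow> a*(int A + 1) \<le> b * int L"
proof -
  have "(real_of_int a / real_of_int b \<le> real L / (real A + 1)) \<longleftrightarrow> real_of_int a * (real A + 1) \<le> real L * real_of_int b"
    using bpos by (simp add: divide_le_eq le_divide_eq field_simps)
  also have "\<dots> \<longleftrightarrow> real_of_int (a*(int A + 1)) \<le> real_of_int (b * int L)"
    by (simp add: algebra_simps)
  also have "\<dots> \<longleftrightarrow> a*(int A + 1) \<le> b * int L" by linarith
  finally show ?thesis .
qed

lemma C1_eq: "{c \<in> D \<inter> E. big_M D E c \<le> ereal (real_of_int a / real_of_int b)} = C1"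
proof (intro set_eqI iffI)
  fix c assume c: "c \<in> {c \<in> D \<inter> E. big_M D E c \<le> ereal (real_of_int a / real_of_int b)}"
  obtain x q where cx: "c = (x,q)" by force
  have ar: "int (arm D c) = rowl D q - x" using arm_eq[OF sD apos bpos, of c] c cx by simp
  have lg: "int (leg E c) = colh E x - q" using leg_eq[OF sE apos bpos, of c] c cx by simp
  have "arm D c \<noteq> 0" using c unfolding big_M_def by (cases "arm D c = 0") auto
  hence A: "0 < arm D c" by simp
  have "(real (leg E c) + 1)/real (arm D c) \<le> real_of_int a / real_of_int b"
    using c A unfolding big_M_def by auto
  hence "b*(int (leg E c) + 1) \<le> a * int (arm D c)" using frac1[OF A] by simp
  thus "c \<in> C1" using c cx ar lg A unfolding C1_def by auto
next
  fix c assume c: "c \<in> C1"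
  obtain x q where cx: "c = (x,q)" by force
  have cD: "c \<in> D" "c \<in> E" using c cx unfolding C1_def by auto
  have ar: "int (arm D c) = rowl D q - x" using arm_eq[OF sD apos bpos, of c] cD cx by simp
  have lg: "int (leg E c) = colh E x - q" using leg_eq[OF sE apos bpos, of c] cD cx by simp
  have A: "0 < arm D c" using c cx ar unfolding C1_def by auto
  have "b*(int (leg E c) + 1) \<le> a * int (arm D c)" using c cx ar lg unfolding C1_def by auto
  hence "(real (leg E c) + 1)/real (arm D c) \<le> real_of_int a / real_of_int b" using frac1[OF A] by simp
  thus "c \<in> {c \<in> D \<inter> E. big_M D E c \<le> ereal (real_of_int a / real_of_int b)}"
    using cD A unfolding big_M_def by auto
qed

definition C2 where "C2 = {(u,v). (u,v) \<in> D \<and> (u,v) \<in> E \<and> a*(rowl E v - u + 1) \<le> b*(colh D u - v)}"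

lemma C2_eq: "{c \<in> D \<inter> E. small_m E D c \<ge> real_of_int a / real_of_int b} = C2"
proof (intro set_eqI)
  fix c :: cell
  obtain u v where cx: "c = (u,v)" by force
  show "c \<in> {c \<in> D \<inter> E. small_m E D c \<ge> real_of_int a / real_of_int b} \<longleftrightarrow> c \<in> C2"
  proof (cases "c \<in> D \<and> c \<in> E")
    case True
    have ar: "int (arm E c) = rowl E v - u" using arm_eq[OF sE apos bpos, of c] True cx by simp
    have lg: "int (leg D c) = colh D u - v" using leg_eq[OF sD apos bpos, of c] True cx by simp
    have "small_m E D c \<ge> real_of_int a / real_of_int b \<longleftrightarrow> a*(int (arm E c) + 1) \<le> b * int (leg D c)"
      unfolding small_m_def using frac2[of "leg D c" "arm E c"] by simp
    thus ?thesis using True ar lg cx unfolding C2_def by auto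
  next
    case False thus ?thesis using cx unfolding C2_def by auto
  qed
qed


lemma Nb_iff: "((p,q),(x,y)) \<in> Nb a b D E \<longleftrightarrow>
   (p,q) \<in> D \<and> 1 \<le> x \<and> y = colh E x + 1 \<and> 0 \<le> a*(p-x) + b*(q-y) \<and> a*(p-x) + b*(q-y) < a \<and> q < y"
  unfolding Nb_def using Nset_iff by auto

lemma Nr_iff: "((p,q),(x,y)) \<in> Nr a b D E \<longleftrightarrow>
   (p,q) \<in> D \<and> 1 \<le> x \<and> y = colh E x + 1 \<and> 0 \<le> a*(p-x) + b*(q-y) \<and> a*(p-x) + b*(q-y) < a \<and> y \<le> q"
  unfolding Nr_def Nb_def using Nset_iff by auto

lemma Nb_to_C1:
  assumes "((p,q),(x,y)) \<in> Nb a b D E"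
  shows "(x,q) \<in> C1"
proof -
  have h: "(p,q) \<in> D" "1 \<le> x" "y = colh E x + 1" "0 \<le> a*(p-x) + b*(q-y)" "a*(p-x) + b*(q-y) < a" "q < y"
    using assms Nb_iff by auto
  have pq: "1 \<le> p" "1 \<le> q" "p \<le> rowl D q" using h(1) rowD[of p q] bdD[of p q] by auto
  have xE: "(x,q) \<in> E" using colE[of x q] pq h by simp
  have "b*(y-q) > 0" using bpos h(6) by simp
  moreover have "b*(q-y) = - (b*(y-q))" by (simp add: algebra_simps)
  ultimately have "a*(p-x) > 0" using h(4) by linarith
  hence px: "p - x > 0" using apos by (simp add: zero_less_mult_iff)
  have xD: "(x,q) \<in> D" using sub_down[OF sD apos bpos h(1), of x q] h(2) px pq by simp
  have "a*(p-x) \<le> a*(rowl D q - x)" using mmono[OF apos, of "p-x" "rowl D q - x"] pq by simp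
  moreover have "b*(colh E x - q + 1) = b*(y - q)" using h(3) by simp
  ultimately have "b*(colh E x - q + 1) \<le> a*(rowl D q - x)" using h(4) \<open>b*(q-y) = - (b*(y-q))\<close> by linarith
  thus ?thesis unfolding C1_def using xE xD px pq by auto
qed

lemma C1_to_Nb:
  assumes "(x,q) \<in> C1"
  shows "\<exists>p. ((p,q),(x, colh E x + 1)) \<in> Nb a b D E"
proof -
  have c: "(x,q) \<in> D" "(x,q) \<in> E" "0 < rowl D q - x" "b*(colh E x - q + 1) \<le> a*(rowl D q - x)"
    using assms unfolding C1_def by auto
  have q: "1 \<le> q" "q \<le> colh E x" "1 \<le> x" using c(2) colE[of x q] bdE[of x q] by auto
  define K where "K = b*(colh E x + 1 - q)"
  define t where "t = (K + a - 1) div a"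
  have cl: "K \<le> a*t" "a*t < K + a" using ceil_lemma[OF apos, of K] unfolding t_def by auto
  have "K > 0" unfolding K_def using bpos q by simp
  hence "a*t > 0" using cl by simp
  hence tp: "t > 0" using apos by (simp add: zero_less_mult_iff)
  have "K \<le> a*(rowl D q - x)" using c(4) unfolding K_def by (simp add: algebra_simps)
  hence "a*t < a*(rowl D q - x) + a" using cl by simp
  hence "t \<le> rowl D q - x" using mcancel_lt1[OF apos] by blast
  hence pD: "(x + t, q) \<in> D" using rowD[of "x+t" q] q tp by simp
  have e1: "a*(x + t - x) = a*t" by simp
  have e2: "b*(q - (colh E x + 1)) = - K" unfolding K_def by (simp add: algebra_simps)
  have "((x+t,q),(x, colh E x + 1)) \<in> Nb a b D E"
    unfolding Nb_iff using pD q e1 e2 cl by simp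
  thus ?thesis by blast
qed

lemma Nb_bij: "bij_betw (\<lambda>(i,j). (fst j, snd i)) (Nb a b D E) C1"
proof (rule bij_betwI')
  fix X Y assume X: "X \<in> Nb a b D E" and Y: "Y \<in> Nb a b D E"
  obtain p q x y where Xe: "X = ((p,q),(x,y))" by (metis prod.collapse)
  obtain p' q' x' y' where Ye: "Y = ((p',q'),(x',y'))" by (metis prod.collapse)
  show "((\<lambda>(i,j). (fst j, snd i)) X = (\<lambda>(i,j). (fst j, snd i)) Y) = (X = Y)"
  proof
    assume "(\<lambda>(i,j). (fst j, snd i)) X = (\<lambda>(i,j). (fst j, snd i)) Y"
    hence xx: "x' = x" "q' = q" using Xe Ye by auto
    have hx: "y = colh E x + 1" "0 \<le> a*(p-x) + b*(q-y)" "a*(p-x) + b*(q-y) < a"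
      using X Xe Nb_iff by auto
    have hy: "y' = colh E x + 1" "0 \<le> a*(p'-x) + b*(q-y')" "a*(p'-x) + b*(q-y') < a"
      using Y Ye xx Nb_iff by auto
    have "p - x = p' - x" using uniq_a[OF apos, of "p-x" "b*(q-y)" "p'-x"] hx hy by simp
    thus "X = Y" using Xe Ye xx hx hy by simp
  qed simp
next
  fix X assume X: "X \<in> Nb a b D E"
  obtain p q x y where Xe: "X = ((p,q),(x,y))" by (metis prod.collapse)
  show "(\<lambda>(i,j). (fst j, snd i)) X \<in> C1" using Nb_to_C1 X Xe by simp
next
  fix c assume c: "c \<in> C1"
  obtain x q where ce: "c = (x,q)" by force
  obtain p where "((p,q),(x, colh E x + 1)) \<in> Nb a b D E" using C1_to_Nb c ce by blast
  thus "\<exists>X\<in>Nb a b D E. c = (\<lambda>(i,j). (fst j, snd i)) X" using ce by force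
qed

lemma Nb_card: "card (Nb a b D E) = card {c \<in> D \<inter> E. big_M D E c \<le> ereal (real_of_int a / real_of_int b)}"
  unfolding C1_eq using bij_betw_same_card[OF Nb_bij] .


definition sv :: "cell \<Rightarrow> int \<Rightarrow> int" where
  "sv i x = a*(x - fst i) + b*(colh E x + 1 - snd i)"
definition H where "H i = {x. fst i \<le> x \<and> -a < sv i x \<and> sv i x \<le> 0}"
definition Dn where "Dn i = {x. fst i \<le> x \<and> 0 < sv i x + a \<and> sv i (x+1) \<le> 0}"

lemma Nr_image: "Nr a b D E = (\<lambda>(i,x). (i,(x, colh E x + 1))) ` (Sigma D H)"
proof (intro set_eqI iffI)
  fix X assume X: "X \<in> Nr a b D E"
  obtain p q x y where Xe: "X = ((p,q),(x,y))" by (metis prod.collapse)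
  have h: "(p,q) \<in> D" "1 \<le> x" "y = colh E x + 1" "0 \<le> a*(p-x) + b*(q-y)" "a*(p-x) + b*(q-y) < a" "y \<le> q"
    using X Xe Nr_iff by auto
  have sv: "sv (p,q) x = - (a*(p-x) + b*(q-y))" unfolding sv_def using h(3) by (simp add: algebra_simps)
  have "b*(y-q) \<le> 0" using h(6) bpos by (simp add: mult_le_0_iff)
  moreover have "sv (p,q) x = a*(x-p) + b*(y-q)" unfolding sv_def using h(3) by simp
  ultimately have "a*(x-p) > a*(-1)" using sv h(5) by simp
  hence "x - p > -1" using mcancel_lt[OF apos] by blast
  hence "x \<in> H (p,q)" unfolding H_def using sv h by simp
  thus "X \<in> (\<lambda>(i,x). (i,(x, colh E x + 1))) ` (Sigma D H)" using Xe h by force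
next
  fix X assume "X \<in> (\<lambda>(i,x). (i,(x, colh E x + 1))) ` (Sigma D H)"
  then obtain p q x where Xe: "X = ((p,q),(x,colh E x + 1))" and pD: "(p,q) \<in> D" and xH: "x \<in> H (p,q)"
    by force
  have sv: "-a < sv (p,q) x" "sv (p,q) x \<le> 0" "p \<le> x" using xH unfolding H_def by auto
  have e: "sv (p,q) x = - (a*(p-x) + b*(q-(colh E x + 1)))" unfolding sv_def by (simp add: algebra_simps)
  have p1: "1 \<le> p" using bdD[of p q] pD by simp
  have "a*(x-p) \<ge> 0" using sv(3) apos by simp
  moreover have "sv (p,q) x = a*(x-p) + b*(colh E x + 1 - q)" unfolding sv_def by simp
  ultimately have "b*(colh E x + 1 - q) \<le> 0" using sv(2) by linarith
  hence "colh E x + 1 - q \<le> 0" using bpos by (simp add: mult_le_0_iff)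
  thus "X \<in> Nr a b D E" unfolding Xe Nr_iff using pD p1 sv e by simp
qed

lemma Nr_inj: "inj_on (\<lambda>(i,x). (i,(x, colh E x + 1))) (Sigma D H)"
  by (rule inj_onI) auto

lemma spos:
  assumes "i \<in> D" "fst i + b * snd i \<le> x"
  shows "0 < sv i x"
proof -
  obtain u h where ie: "i = (u,h)" by force
  have h1: "1 \<le> h" using bdD[of u h] assms(1) ie by simp
  have "b*h \<ge> 0" using bpos h1 by simp
  hence xu: "x - u \<ge> b*h" "x - u \<ge> 0" using assms(2) ie by auto
  have f1: "x-u \<le> a*(x-u)" using mult_right_mono[of 1 a "x-u"] xu(2) a1 by simp
  have f2: "b*(1 - h) \<le> b*(colh E x + 1 - h)" using mmono[OF bpos, of "1-h" "colh E x + 1 - h"] colh_nonneg[of E x] by linarith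
  have f3: "b*(1 - h) = b - b*h" by (simp add: algebra_simps)
  have "sv i x = a*(x-u) + b*(colh E x + 1 - h)" unfolding sv_def ie by simp
  thus ?thesis using f1 f2 f3 xu bpos by linarith
qed

lemma card_filter_sum:
  assumes "finite I"
  shows "int (card {x\<in>I. P x}) = (\<Sum>x\<in>I. if P x then 1 else 0::int)"
  using sum.inter_filter[OF assms, of "\<lambda>_. 1::int" P] by simp

lemma tele:
  assumes iD: "i \<in> D"
  shows "int (card (H i)) = (if i \<in> E then 0 else 1) + int (card (Dn i))"
proof -
  obtain u h where ie: "i = (u,h)" by force
  have u1: "1 \<le> u" and h1: "1 \<le> h" using bdD[of u h] iD ie by auto
  define n where "n = nat (b*h)"
  have nn: "int n = b*h" unfolding n_def using bpos h1 by simp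
  define I where "I = {u..<u + int n}"
  have finI: "finite I" unfolding I_def by simp
  have HI: "H i = {x\<in>I. -a < sv i x \<and> sv i x \<le> 0}"
  proof (intro set_eqI iffI)
    fix x assume "x \<in> H i"
    hence x: "u \<le> x" "sv i x \<le> 0" "-a < sv i x" using ie unfolding H_def by auto
    have "x < u + int n" using spos[OF iD, of x] x nn ie by force
    thus "x \<in> {x\<in>I. -a < sv i x \<and> sv i x \<le> 0}" using x unfolding I_def by simp
  qed (auto simp: H_def I_def ie)
  have DI: "Dn i = {x\<in>I. 0 < sv i x + a \<and> sv i (x+1) \<le> 0}"
  proof (intro set_eqI iffI)
    fix x assume "x \<in> Dn i"
    hence x: "u \<le> x" "sv i (x+1) \<le> 0" "0 < sv i x + a" using ie unfolding Dn_def by auto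
    have "x + 1 < u + int n" using spos[OF iD, of "x+1"] x nn ie by force
    thus "x \<in> {x\<in>I. 0 < sv i x + a \<and> sv i (x+1) \<le> 0}" using x unfolding I_def by simp
  qed (auto simp: Dn_def I_def ie)
  define A where "A x = (if sv i x \<le> 0 then 1 else 0::int)" for x
  have pt: "(if -a < sv i x \<and> sv i x \<le> 0 then 1 else 0) - (if 0 < sv i x + a \<and> sv i (x+1) \<le> 0 then 1 else 0)
      = A x - A (x+1)" if xI: "x \<in> I" for x
  proof -
    have x1: "1 \<le> x" "u \<le> x" using xI u1 unfolding I_def by auto
    have "colh E (x+1) \<le> colh E x" using colh_mono[OF sE apos bpos x1(1)] by simp
    hence "b*(colh E (x+1) + 1 - h) \<le> b*(colh E x + 1 - h)" using mmono[OF bpos] by simp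
    moreover have "a*(x + 1 - u) = a*(x-u) + a" by (simp add: algebra_simps)
    ultimately have "sv i (x+1) \<le> sv i x + a" unfolding sv_def ie by simp
    thus ?thesis unfolding A_def using apos by auto
  qed
  have "int (card (H i)) - int (card (Dn i)) =
     (\<Sum>x\<in>I. (if -a < sv i x \<and> sv i x \<le> 0 then 1 else 0) - (if 0 < sv i x + a \<and> sv i (x+1) \<le> 0 then 1 else 0))"
    unfolding HI DI card_filter_sum[OF finI] sum_subtractf by simp
  also have "\<dots> = (\<Sum>x\<in>I. A x - A (x+1))" using pt by (intro sum.cong) auto
  also have "\<dots> = A u - A (u + int n)" unfolding I_def by (rule telescope)
  also have "A (u + int n) = 0" unfolding A_def using spos[OF iD, of "u + int n"] nn ie by simp
  also have "A u = (if i \<in> E then 0 else 1)"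
  proof -
    have "sv i u = b*(colh E u + 1 - h)" unfolding sv_def ie by simp
    hence "sv i u \<le> 0 \<longleftrightarrow> colh E u + 1 - h \<le> 0" using bpos by (simp add: mult_le_0_iff)
    moreover have "i \<in> E \<longleftrightarrow> h \<le> colh E u" using colE[of u h] h1 ie by simp
    ultimately show ?thesis unfolding A_def by auto
  qed
  finally show ?thesis by simp
qed


definition kf where "kf u x = (a*(x + 1 - u) + b - 1) div b"

lemma Dn_to_C2:
  assumes iD: "(u,h) \<in> D" and xD: "x \<in> Dn (u,h)"
  shows "(u, h - kf u x) \<in> C2 \<and> rowl E (h - kf u x) = x"
proof -
  define K where "K = a*(x + 1 - u)"
  define k where "k = kf u x"
  define v where "v = h - k"
  have cl: "K \<le> b*k" "b*k < K + b" using ceil_lemma[OF bpos, of K] unfolding k_def kf_def K_def by auto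
  have x: "u \<le> x" "sv (u,h) (x+1) \<le> 0" "0 < sv (u,h) x + a" using xD unfolding Dn_def by auto
  have u1: "1 \<le> u" and h1: "1 \<le> h" and hD: "h \<le> colh D u" using bdD[of u h] iD colD[of u h] by auto
  have x1: "1 \<le> x" using x u1 by simp
  have s1: "sv (u,h) (x+1) = K + b*(colh E (x+1) + 1 - h)" unfolding sv_def K_def by simp
  have s0: "sv (u,h) x + a = K + b*(colh E x + 1 - h)" unfolding sv_def K_def by (simp add: algebra_simps)
  have "b*(colh E (x+1) + 1 - h) = - (b*(h - colh E (x+1) - 1))" by (simp add: algebra_simps)
  hence "K \<le> b*(h - colh E (x+1) - 1)" using x(2) s1 by linarith
  hence "b*k < b*(h - colh E (x+1) - 1) + b" using cl by linarith
  hence k1: "k \<le> h - colh E (x+1) - 1" using mcancel_lt1[OF bpos] by blast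
  have "b*(colh E x + 1 - h) = - (b*(h - colh E x - 1))" by (simp add: algebra_simps)
  hence "b*(h - colh E x - 1) < b*k" using x(3) s0 cl by linarith
  hence k2: "h - colh E x - 1 < k" using mcancel_lt[OF bpos] by blast
  have "K > 0" unfolding K_def using apos x(1) by simp
  hence "b*k > 0" using cl by simp
  hence k0: "k > 0" using bpos by (simp add: zero_less_mult_iff)
  have v1: "1 \<le> v" using k1 colh_nonneg[of E "x+1"] unfolding v_def by simp
  have xvE: "(x,v) \<in> E" using colE[of x v] v1 k2 unfolding v_def by simp
  have xvE': "(x+1,v) \<notin> E" using colE[of "x+1" v] k1 unfolding v_def by simp
  have rw: "rowl E v = x" using rowE[of x v] rowE[of "x+1" v] xvE xvE' x1 by simp
  have uvE: "(u,v) \<in> E" using rowE[of u v] u1 x(1) rw by simp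
  have uvD: "(u,v) \<in> D" using colD[of u v] v1 hD k0 unfolding v_def by simp
  have "b*k \<le> b*(colh D u - v)" using mmono[OF bpos, of k "colh D u - v"] hD unfolding v_def by simp
  hence "a*(rowl E v - u + 1) \<le> b*(colh D u - v)" using cl rw unfolding K_def by (simp add: algebra_simps)
  thus ?thesis using uvE uvD rw unfolding C2_def v_def k_def by simp
qed

lemma C2_to_Dn:
  assumes c: "(u,v) \<in> C2"
  shows "(u, v + kf u (rowl E v)) \<in> D \<and> rowl E v \<in> Dn (u, v + kf u (rowl E v))"
proof -
  define x where "x = rowl E v"
  define K where "K = a*(x + 1 - u)"
  define k where "k = kf u x"
  define h where "h = v + k"
  have cl: "K \<le> b*k" "b*k < K + b" using ceil_lemma[OF bpos, of K] unfolding k_def kf_def K_def by auto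
  have cc: "(u,v) \<in> D" "(u,v) \<in> E" "a*(x - u + 1) \<le> b*(colh D u - v)" using c unfolding C2_def x_def by auto
  have u1: "1 \<le> u" "u \<le> x" using rowE[of u v] cc(2) unfolding x_def by auto
  have v1: "1 \<le> v" "v \<le> colh D u" using colD[of u v] cc(1) by auto
  have "K \<le> b*(colh D u - v)" using cc(3) unfolding K_def by (simp add: algebra_simps)
  hence "b*k < b*(colh D u - v) + b" using cl by linarith
  hence kL: "k \<le> colh D u - v" using mcancel_lt1[OF bpos] by blast
  have "K > 0" unfolding K_def using apos u1 by simp
  hence "b*k > 0" using cl by simp
  hence k0: "k > 0" using bpos by (simp add: zero_less_mult_iff)
  have hD: "(u,h) \<in> D" using colD[of u h] kL k0 v1 unfolding h_def by simp
  have xvE: "(x,v) \<in> E" using rowE[of x v] u1 unfolding x_def by simp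
  have xvE': "(x+1,v) \<notin> E" using rowE[of "x+1" v] unfolding x_def by simp
  have c1: "v \<le> colh E x" using colE[of x v] xvE by simp
  have c2: "colh E (x+1) < v" using colE[of "x+1" v] xvE' v1 by simp
  have s1: "sv (u,h) (x+1) = K + b*(colh E (x+1) + 1 - h)" unfolding sv_def K_def by simp
  have s0: "sv (u,h) x + a = K + b*(colh E x + 1 - h)" unfolding sv_def K_def by (simp add: algebra_simps)
  have "b*(colh E (x+1) + 1 - h) \<le> b*(-k)" using mmono[OF bpos, of "colh E (x+1) + 1 - h" "-k"] c2 unfolding h_def by simp
  hence "sv (u,h) (x+1) \<le> 0" using s1 cl by simp
  moreover have "b*(1-k) \<le> b*(colh E x + 1 - h)" using mmono[OF bpos, of "1-k" "colh E x + 1 - h"] c1 unfolding h_def by simp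
  moreover have "b*(1-k) = b - b*k" by (simp add: algebra_simps)
  ultimately have "x \<in> Dn (u,h)" unfolding Dn_def using u1 s0 cl by simp
  thus ?thesis using hD unfolding h_def k_def x_def by simp
qed

lemma Dn_bij: "bij_betw (\<lambda>(i,x). (fst i, snd i - kf (fst i) x)) (Sigma D Dn) C2"
proof (rule bij_betwI')
  fix X Y assume X: "X \<in> Sigma D Dn" and Y: "Y \<in> Sigma D Dn"
  obtain u h x where Xe: "X = ((u,h),x)" by (metis prod.collapse)
  obtain u' h' x' where Ye: "Y = ((u',h'),x')" by (metis prod.collapse)
  show "((\<lambda>(i,x). (fst i, snd i - kf (fst i) x)) X = (\<lambda>(i,x). (fst i, snd i - kf (fst i) x)) Y) = (X = Y)"
  proof
    assume "(\<lambda>(i,x). (fst i, snd i - kf (fst i) x)) X = (\<lambda>(i,x). (fst i, snd i - kf (fst i) x)) Y"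
    hence e: "u' = u" "h - kf u x = h' - kf u x'" using Xe Ye by auto
    have "rowl E (h - kf u x) = x" using Dn_to_C2[of u h x] X Xe by auto
    moreover have "rowl E (h' - kf u x') = x'" using Dn_to_C2[of u h' x'] Y Ye e by auto
    ultimately have "x = x'" using e by simp
    thus "X = Y" using Xe Ye e by simp
  qed simp
next
  fix X assume X: "X \<in> Sigma D Dn"
  obtain u h x where Xe: "X = ((u,h),x)" by (metis prod.collapse)
  show "(\<lambda>(i,x). (fst i, snd i - kf (fst i) x)) X \<in> C2" using Dn_to_C2[of u h x] X Xe by auto
next
  fix c assume c: "c \<in> C2"
  obtain u v where ce: "c = (u,v)" by force
  have "((u, v + kf u (rowl E v)), rowl E v) \<in> Sigma D Dn" using C2_to_Dn[of u v] c ce by auto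
  moreover have "c = (\<lambda>(i,x). (fst i, snd i - kf (fst i) x)) ((u, v + kf u (rowl E v)), rowl E v)" using ce by simp
  ultimately show "\<exists>X\<in>Sigma D Dn. c = (\<lambda>(i,x). (fst i, snd i - kf (fst i) x)) X" by blast
qed

lemma finH: "i \<in> D \<Longrightarrow> finite (H i)"
proof (rule finite_subset[of _ "{fst i..<fst i + b * snd i}"])
  assume iD: "i \<in> D"
  show "H i \<subseteq> {fst i..<fst i + b * snd i}"
  proof
    fix x assume "x \<in> H i"
    hence x: "fst i \<le> x" "sv i x \<le> 0" unfolding H_def by auto
    have "\<not> fst i + b * snd i \<le> x" using spos[OF iD, of x] x by auto
    thus "x \<in> {fst i..<fst i + b * snd i}" using x by simp
  qed
qed simp

lemma finDn: "i \<in> D \<Longrightarrow> finite (Dn i)"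
proof (rule finite_subset[of _ "{fst i..<fst i + b * snd i}"])
  assume iD: "i \<in> D"
  show "Dn i \<subseteq> {fst i..<fst i + b * snd i}"
  proof
    fix x assume "x \<in> Dn i"
    hence x: "fst i \<le> x" "sv i (x+1) \<le> 0" unfolding Dn_def by auto
    have "\<not> fst i + b * snd i \<le> x + 1" using spos[OF iD, of "x+1"] x by auto
    thus "x \<in> {fst i..<fst i + b * snd i}" using x by simp
  qed
qed simp

lemma Nr_card: "card (Nr a b D E) = card (D - E) + card {c \<in> D \<inter> E. small_m E D c \<ge> real_of_int a / real_of_int b}"
proof -
  have "card (Nr a b D E) = card (Sigma D H)"
    unfolding Nr_image using card_image[OF Nr_inj] .
  also have "\<dots> = (\<Sum>i\<in>D. card (H i))" using finD finH by simp
  finally have "int (card (Nr a b D E)) = (\<Sum>i\<in>D. int (card (H i)))" by simp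
  also have "\<dots> = (\<Sum>i\<in>D. (if i \<in> E then 0 else 1) + int (card (Dn i)))"
    using tele by (intro sum.cong) auto
  also have "\<dots> = (\<Sum>i\<in>D. (if i \<in> E then 0 else 1)) + (\<Sum>i\<in>D. int (card (Dn i)))"
    by (rule sum.distrib)
  also have "(\<Sum>i\<in>D. (if i \<in> E then 0 else 1::int)) = int (card (D - E))"
  proof -
    have "(\<Sum>i\<in>D. (if i \<in> E then 0 else 1::int)) = (\<Sum>i\<in>D. (if i \<notin> E then 1 else 0::int))"
      by (intro sum.cong) auto
    also have "\<dots> = int (card {i\<in>D. i \<notin> E})" using card_filter_sum[OF finD, of "\<lambda>i. i \<notin> E"] by simp
    also have "{i\<in>D. i \<notin> E} = D - E" by auto
    finally show ?thesis .
  qed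
  also have "(\<Sum>i\<in>D. int (card (Dn i))) = int (card (Sigma D Dn))"
    using finD finDn by simp
  also have "card (Sigma D Dn) = card C2" using bij_betw_same_card[OF Dn_bij] .
  finally show ?thesis unfolding C2_eq by simp
qed

end

theorem mainTheorem7:
  fixes a b :: int and D E :: "cell set"
  assumes "1 < a" and "a < b" and "coprime a b"
    and "subdiagram a b D" and "subdiagram a b E"
  shows "card (Nb a b D E) = card {c \<in> D \<inter> E. big_M D E c \<le> ereal (real_of_int a / real_of_int b)}
       \<and> card (Nr a b D E) = card (D - E)
            + card {c \<in> D \<inter> E. small_m E D c \<ge> real_of_int a / real_of_int b}"
proof -
  interpret twoD a b D E using assms by unfold_locales auto
  show ?thesis using Nb_card Nr_card by simp
qed

end
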